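(* In the Standing Setting, let $(p,B)$ be a flag with $p=(\alpha,\beta)$, let $c$ be the number of points of $B$ whose first coordinate is $\alpha$, and $d$ the number of points of $B$ whose second coordinate is $\beta$ (both counts include $p$). Then $k=\frac{(c+d-2)(\omega+1)}{2}+1$.
   Context: Standing Setting: $\mathcal{D}=(\Omega,\mathcal{B})$ is a non-trivial $2$-$(v,k,\lambda)$ design (every two distinct points in exactly $\lambda$ blocks, blocks of size $k$, $2<k<v$) with $b$ blocks and replication number $r$, satisfying $\lambda\ge (r,\lambda)^2$. $G\le\mathrm{Aut}(\mathcal{D})$ is flag-transitive (transitive on pairs $(p,B)$ with $p\in B\in\mathcal{B}$). Moreover $\Omega=\Delta\times\Delta$ with $|\Delta|=\omega\ge 5$ odd, so $v=\omega^2$, and $T\times T\trianglelefteq G\le T_0\wr \mathbb{Z}_2$ acting in product action (the $\mathbb{Z}_2$ interchanging the two coordinates), where $T_0\le\mathrm{Sym}(\Delta)$ is $2$-transitive with nonabelian simple socle $T$; $G$ has rank $3$ on $\Omega$. *)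

theory Defs
  imports "HOL-Algebra.Algebra"
begin

text \<open>A permutation group on a set S is a subgroup of BijGroup S; the subgroup
  with carrier H is the group (BijGroup S)(carrier := H).\<close>

definition minimal_normal :: "('g, 'b) monoid_scheme \<Rightarrow> 'g set \<Rightarrow> bool" where
  "minimal_normal H N \<longleftrightarrow> N \<lhd> H \<and> N \<noteq> {\<one>\<^bsub>H\<^esub>} \<and>
     (\<forall>M. M \<lhd> H \<and> M \<subseteq> N \<longrightarrow> M = {\<one>\<^bsub>H\<^esub>} \<or> M = N)"

definition socle :: "('g, 'b) monoid_scheme \<Rightarrow> 'g set" where
  "socle H = generate H (\<Union>{N. minimal_normal H N})"

definition two_transitive :: "'a set \<Rightarrow> ('a \<Rightarrow> 'a) set \<Rightarrow> bool" where
  "two_transitive S H \<longleftrightarrow>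
     (\<forall>a\<in>S. \<forall>b\<in>S. \<forall>c\<in>S. \<forall>d\<in>S. a \<noteq> b \<and> c \<noteq> d \<longrightarrow> (\<exists>g\<in>H. g a = c \<and> g b = d))"

definition transitive_on :: "'a set \<Rightarrow> ('a \<Rightarrow> 'a) set \<Rightarrow> bool" where
  "transitive_on S H \<longleftrightarrow> (\<forall>a\<in>S. \<forall>b\<in>S. \<exists>g\<in>H. g a = b)"

definition orbitals :: "'a set \<Rightarrow> ('a \<Rightarrow> 'a) set \<Rightarrow> ('a \<times> 'a) set set" where
  "orbitals S H = (\<lambda>(a, b). {(g a, g b) | g. g \<in> H}) ` (S \<times> S)"

definition has_rank :: "'a set \<Rightarrow> ('a \<Rightarrow> 'a) set \<Rightarrow> nat \<Rightarrow> bool" where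
  "has_rank S H n \<longleftrightarrow> transitive_on S H \<and> card (orbitals S H) = n"

definition prod_perm :: "'a set \<Rightarrow> ('a \<Rightarrow> 'a) \<Rightarrow> ('a \<Rightarrow> 'a) \<Rightarrow> ('a \<times> 'a \<Rightarrow> 'a \<times> 'a)" where
  "prod_perm D g h = (\<lambda>p \<in> D \<times> D. (g (fst p), h (snd p)))"

definition swap_perm :: "'a set \<Rightarrow> ('a \<times> 'a \<Rightarrow> 'a \<times> 'a)" where
  "swap_perm D = (\<lambda>p \<in> D \<times> D. (snd p, fst p))"

definition prod_group :: "'a set \<Rightarrow> ('a \<Rightarrow> 'a) set \<Rightarrow> ('a \<Rightarrow> 'a) set \<Rightarrow> ('a \<times> 'a \<Rightarrow> 'a \<times> 'a) set" where
  "prod_group D H K = {prod_perm D g h | g h. g \<in> H \<and> h \<in> K}"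

definition wreath2_product_action :: "'a set \<Rightarrow> ('a \<Rightarrow> 'a) set \<Rightarrow> ('a \<times> 'a \<Rightarrow> 'a \<times> 'a) set" where
  "wreath2_product_action D H =
     prod_group D H H \<union> {compose (D \<times> D) x (swap_perm D) | x. x \<in> prod_group D H H}"

definition design_2 :: "'p set \<Rightarrow> 'p set set \<Rightarrow> nat \<Rightarrow> nat \<Rightarrow> nat \<Rightarrow> bool" where
  "design_2 P Bs v k lam \<longleftrightarrow> finite P \<and> card P = v \<and>
     (\<forall>B\<in>Bs. B \<subseteq> P \<and> card B = k) \<and>
     (\<forall>x\<in>P. \<forall>y\<in>P. x \<noteq> y \<longrightarrow> card {B \<in> Bs. x \<in> B \<and> y \<in> B} = lam)"

definition replication :: "'p set \<Rightarrow> 'p set set \<Rightarrow> nat \<Rightarrow> bool" where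
  "replication P Bs r \<longleftrightarrow> (\<forall>x\<in>P. card {B \<in> Bs. x \<in> B} = r)"

definition is_automorphism :: "'p set \<Rightarrow> 'p set set \<Rightarrow> ('p \<Rightarrow> 'p) \<Rightarrow> bool" where
  "is_automorphism P Bs g \<longleftrightarrow> g \<in> Bij P \<and> (\<lambda>B. g ` B) ` Bs = Bs"

definition flag_transitive :: "'p set \<Rightarrow> 'p set set \<Rightarrow> ('p \<Rightarrow> 'p) set \<Rightarrow> bool" where
  "flag_transitive P Bs H \<longleftrightarrow>
     (\<forall>x B y C. x \<in> B \<and> B \<in> Bs \<and> y \<in> C \<and> C \<in> Bs \<longrightarrow> (\<exists>g\<in>H. g x = y \<and> g ` B = C))"

end

theory Submission
  imports Defs
begin

lemma dc_count:
  assumes "finite Bs" "finite \<Gamma>"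
  shows "(\<Sum>x\<in>\<Gamma>. card {C\<in>Bs. x \<in> C}) = (\<Sum>C\<in>Bs. card (C \<inter> \<Gamma>))"
proof -
  have "(\<Sum>x\<in>\<Gamma>. card {C\<in>Bs. x \<in> C}) = (\<Sum>x\<in>\<Gamma>. \<Sum>C\<in>Bs. if x \<in> C then 1 else 0)"
    using assms by (simp add: sum.inter_filter[symmetric])
  also have "\<dots> = (\<Sum>C\<in>Bs. \<Sum>x\<in>\<Gamma>. if x \<in> C then 1 else 0)"
    by (rule sum.swap)
  also have "\<dots> = (\<Sum>C\<in>Bs. card {x\<in>\<Gamma>. x \<in> C})"
    using assms by (simp add: sum.inter_filter[symmetric])
  also have "\<dots> = (\<Sum>C\<in>Bs. card (C \<inter> \<Gamma>))"
    by (intro sum.cong refl arg_cong[where f=card]) blast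
  finally show ?thesis .
qed

lemma bij_in:
  assumes "f \<in> Bij S" shows "inj_on f S" "\<And>x. x \<in> S \<Longrightarrow> f x \<in> S"
  using assms by (auto simp: Bij_def bij_betw_def)

lemma wreath_rel:
  assumes T0: "T0 \<subseteq> Bij \<Delta>" and g: "g \<in> wreath2_product_action \<Delta> T0"
    and x: "x \<in> \<Delta> \<times> \<Delta>" and y: "y \<in> \<Delta> \<times> \<Delta>"
  shows "(fst (g x) = fst (g y) \<or> snd (g x) = snd (g y)) \<longleftrightarrow> (fst x = fst y \<or> snd x = snd y)"
proof -
  have pp: "(fst (prod_perm \<Delta> g1 h1 a) = fst (prod_perm \<Delta> g1 h1 b)) = (fst a = fst b)
     \<and> (snd (prod_perm \<Delta> g1 h1 a) = snd (prod_perm \<Delta> g1 h1 b)) = (snd a = snd b)"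
    if "g1 \<in> T0" "h1 \<in> T0" "a \<in> \<Delta> \<times> \<Delta>" "b \<in> \<Delta> \<times> \<Delta>" for g1 h1 a b
  proof -
    have "inj_on g1 \<Delta>" "inj_on h1 \<Delta>" using that T0 bij_in by blast+
    then show ?thesis using that by (auto simp: prod_perm_def mem_Times_iff inj_on_def)
  qed
  from g consider (a) g1 h1 where "g1 \<in> T0" "h1 \<in> T0" "g = prod_perm \<Delta> g1 h1"
    | (b) g1 h1 where "g1 \<in> T0" "h1 \<in> T0" "g = compose (\<Delta> \<times> \<Delta>) (prod_perm \<Delta> g1 h1) (swap_perm \<Delta>)"
    unfolding wreath2_product_action_def prod_group_def by blast
  then show ?thesis
  proof cases
    case a then show ?thesis using pp x y by blast
  next
    case b
    have sx: "swap_perm \<Delta> x = (snd x, fst x)" "swap_perm \<Delta> y = (snd y, fst y)"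
      using x y by (auto simp: swap_perm_def)
    have ins: "(snd x, fst x) \<in> \<Delta> \<times> \<Delta>" "(snd y, fst y) \<in> \<Delta> \<times> \<Delta>" using x y by (auto simp: mem_Times_iff)
    have "g x = prod_perm \<Delta> g1 h1 (snd x, fst x)" "g y = prod_perm \<Delta> g1 h1 (snd y, fst y)"
      using b x y sx by (auto simp: compose_def)
    then show ?thesis using pp[OF b(1,2) ins] by auto
  qed
qed

lemma count_lemma:
  assumes finBs: "finite Bs" and finG: "finite \<Gamma>" and GP: "\<Gamma> \<subseteq> P - {p}"
    and lamd: "\<And>x. x \<in> P \<Longrightarrow> x \<noteq> p \<Longrightarrow> card {C\<in>Bs. p\<in>C \<and> x\<in>C} = lam"
    and rdef: "card {C\<in>Bs. p\<in>C} = r"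
    and same: "\<And>C. C\<in>Bs \<Longrightarrow> p\<in>C \<Longrightarrow> card (C\<inter>\<Gamma>) = card (B\<inter>\<Gamma>)"
  shows "lam * card \<Gamma> = r * card (B\<inter>\<Gamma>)"
proof -
  define Bp where "Bp = {C \<in> Bs. p \<in> C}"
  have fBp: "finite Bp" using finBs unfolding Bp_def by simp
  have "(\<Sum>x\<in>\<Gamma>. card {C\<in>Bp. x \<in> C}) = (\<Sum>C\<in>Bp. card (C \<inter> \<Gamma>))"
    using dc_count[OF fBp finG] .
  moreover have "(\<Sum>x\<in>\<Gamma>. card {C\<in>Bp. x \<in> C}) = (\<Sum>x\<in>\<Gamma>. lam)"
  proof (rule sum.cong[OF refl])
    fix x assume "x \<in> \<Gamma>"
    then have "x \<in> P" "x \<noteq> p" using GP by auto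
    then have "card {C \<in> Bs. p \<in> C \<and> x \<in> C} = lam" using lamd by blast
    moreover have "{C\<in>Bp. x \<in> C} = {C \<in> Bs. p \<in> C \<and> x \<in> C}" unfolding Bp_def by blast
    ultimately show "card {C\<in>Bp. x \<in> C} = lam" by simp
  qed
  moreover have "(\<Sum>C\<in>Bp. card (C \<inter> \<Gamma>)) = (\<Sum>C\<in>Bp. card (B \<inter> \<Gamma>))"
    by (rule sum.cong[OF refl]) (use same in \<open>auto simp: Bp_def\<close>)
  ultimately have "card \<Gamma> * lam = card Bp * card (B \<inter> \<Gamma>)" by simp
  then show ?thesis using rdef unfolding Bp_def by (simp add: mult.commute)
qed

lemma card_transfer:
  assumes inj: "inj_on g P" and BP: "B \<subseteq> P" and gB: "g ` B = C"
    and inv: "\<And>x. x \<in> P \<Longrightarrow> (g x \<in> \<Gamma>) = (x \<in> \<Gamma>)"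
  shows "card (C \<inter> \<Gamma>) = card (B \<inter> \<Gamma>)"
proof -
  have "g ` (B \<inter> \<Gamma>) = C \<inter> \<Gamma>"
  proof
    show "g ` (B \<inter> \<Gamma>) \<subseteq> C \<inter> \<Gamma>"
    proof
      fix y assume "y \<in> g ` (B \<inter> \<Gamma>)"
      then obtain x where x: "x \<in> B" "x \<in> \<Gamma>" "y = g x" by blast
      then have xP: "x \<in> P" using BP by blast
      have "g x \<in> \<Gamma>" using x(2) inv[OF xP] by simp
      moreover have "g x \<in> C" using x(1) gB by blast
      ultimately show "y \<in> C \<inter> \<Gamma>" using x(3) by simp
    qed
    show "C \<inter> \<Gamma> \<subseteq> g ` (B \<inter> \<Gamma>)"
    proof
      fix y assume y: "y \<in> C \<inter> \<Gamma>"
      then obtain x where x: "x \<in> B" "y = g x" using gB by auto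
      then have xP: "x \<in> P" using BP by blast
      have "g x \<in> \<Gamma>" using y x(2) by simp
      then have "x \<in> \<Gamma>" using inv[OF xP] by simp
      then show "y \<in> g ` (B \<inter> \<Gamma>)" using x by blast
    qed
  qed
  moreover have "inj_on g (B \<inter> \<Gamma>)" by (rule inj_on_subset[OF inj]) (use BP in blast)
  ultimately show ?thesis by (metis card_image)
qed

lemma arith_end:
  fixes lam r m n \<omega> k c d :: nat
  assumes e1: "lam * (2*(\<omega>-1)) = r*m" and e2: "lam*((\<omega>-1)*(\<omega>-1)) = r*n"
    and lp: "lam>0" and w: "\<omega>\<ge>2" and kd: "k = 1+m+n" and md: "m = (c-1)+(d-1)" and c: "c\<ge>1" "d\<ge>1"
  shows "real k = (real c + real d - 2)*(real \<omega>+1)/2 + 1"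
proof -
  define w where "w = \<omega> - 1"
  have w1: "w \<ge> 1" using w w_def by simp
  have "lam * (2 * w) > 0" using lp w1 by simp
  moreover have "lam * (2 * w) = r * m" using e1 unfolding w_def .
  ultimately have "r * m > 0" by linarith
  then have rp: "r > 0" by simp
  have "r * (m * w) = r * (2 * n)"
  proof -
    have "r * (m * w) = (r*m)*w" by simp
    also have "\<dots> = lam * (2*w) * w" using e1 w_def by simp
    also have "\<dots> = 2 * (lam * (w*w))" by simp
    also have "\<dots> = 2 * (r * n)" using e2 w_def by simp
    finally show ?thesis by (simp add: mult.left_commute)
  qed
  then have mw: "m * w = 2 * n" using rp by simp
  have "2 * k = 2 + m * (\<omega> + 1)"
  proof -
    have "\<omega> + 1 = w + 2" using w w_def by simp
    then show ?thesis using kd mw by (simp add: algebra_simps)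
  qed
  then have "2 * real k = 2 + real m * (real \<omega> + 1)" by (metis of_nat_add of_nat_mult of_nat_numeral of_nat_1)
  moreover have "real m = real c + real d - 2" using md c by (simp add: of_nat_diff)
  ultimately show ?thesis by (simp add: field_simps)
qed

theorem lemma2p2:
  fixes \<Delta> :: "'a set" and \<omega> :: nat
    and Bs :: "('a \<times> 'a) set set" and v k lam b r :: nat
    and G :: "('a \<times> 'a \<Rightarrow> 'a \<times> 'a) set"
    and T0 T :: "('a \<Rightarrow> 'a) set"
    and \<alpha> \<beta> :: 'a and B :: "('a \<times> 'a) set"
  assumes card_Delta: "card \<Delta> = \<omega>" and omega_ge: "\<omega> \<ge> 5" and omega_odd: "odd \<omega>"
    and design: "design_2 (\<Delta> \<times> \<Delta>) Bs v k lam" and lambda_pos: "lam > 0"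
    and nontriv: "2 < k" "k < v"
    and b_def: "b = card Bs"
    and repl: "replication (\<Delta> \<times> \<Delta>) Bs r"
    and lambda_ge: "(gcd r lam)\<^sup>2 \<le> lam"
    and G_sub: "subgroup G (BijGroup (\<Delta> \<times> \<Delta>))"
    and G_aut: "\<forall>g\<in>G. is_automorphism (\<Delta> \<times> \<Delta>) Bs g"
    and G_flag: "flag_transitive (\<Delta> \<times> \<Delta>) Bs G"
    and T0_sub: "subgroup T0 (BijGroup \<Delta>)"
    and T0_2tr: "two_transitive \<Delta> T0"
    and T_socle: "T = socle ((BijGroup \<Delta>)\<lparr>carrier := T0\<rparr>)"
    and T_simple: "simple_group ((BijGroup \<Delta>)\<lparr>carrier := T\<rparr>)"
    and T_nonab: "\<not> comm_group ((BijGroup \<Delta>)\<lparr>carrier := T\<rparr>)"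
    and TT_normal: "prod_group \<Delta> T T \<lhd> (BijGroup (\<Delta> \<times> \<Delta>))\<lparr>carrier := G\<rparr>"
    and G_wreath: "G \<subseteq> wreath2_product_action \<Delta> T0"
    and G_rank3: "has_rank (\<Delta> \<times> \<Delta>) G 3"
    and flag: "(\<alpha>, \<beta>) \<in> B" "B \<in> Bs"
  shows "real k = (real (card {q \<in> B. fst q = \<alpha>}) + real (card {q \<in> B. snd q = \<beta>}) - 2)
                   * (real \<omega> + 1) / 2 + 1"
proof -
  define P where "P = \<Delta> \<times> \<Delta>"
  define p where "p = (\<alpha>, \<beta>)"
  define rel where "rel = (\<lambda>x y::'a\<times>'a. fst x = fst y \<or> snd x = snd y)"
  have finP: "finite P" and Bk: "\<And>C. C \<in> Bs \<Longrightarrow> C \<subseteq> P \<and> card C = k"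
    and lamd: "\<And>x y. x \<in> P \<Longrightarrow> y \<in> P \<Longrightarrow> x \<noteq> y \<Longrightarrow> card {C \<in> Bs. x \<in> C \<and> y \<in> C} = lam"
  proof -
    have d: "design_2 P Bs v k lam" using design P_def by simp
    show "finite P" using d unfolding design_2_def by blast
    show "\<And>C. C \<in> Bs \<Longrightarrow> C \<subseteq> P \<and> card C = k" using d unfolding design_2_def by blast
    show "\<And>x y. x \<in> P \<Longrightarrow> y \<in> P \<Longrightarrow> x \<noteq> y \<Longrightarrow> card {C \<in> Bs. x \<in> C \<and> y \<in> C} = lam"
      using d unfolding design_2_def by blast
  qed
  have finBs: "finite Bs" proof -
    have "Bs \<subseteq> Pow P" using Bk by blast
    then show ?thesis using finP finite_Pow_iff finite_subset by metis
  qed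
  have pP: "p \<in> P" using flag Bk p_def by auto
  have aD: "\<alpha> \<in> \<Delta>" "\<beta> \<in> \<Delta>" using pP by (auto simp: P_def p_def)
  have finD: "finite \<Delta>" using finP aD by (auto simp: P_def dest: finite_cartesian_productD1)
  have rdef: "card {C \<in> Bs. p \<in> C} = r" using repl pP unfolding replication_def P_def by auto
  have T0B: "T0 \<subseteq> Bij \<Delta>" using subgroup.subset[OF T0_sub] by (simp add: BijGroup_def)
  have GB: "\<And>g. g \<in> G \<Longrightarrow> g \<in> Bij P" using subgroup.subset[OF G_sub] by (auto simp: BijGroup_def P_def)
  have grel: "\<And>g x y. g \<in> G \<Longrightarrow> x \<in> P \<Longrightarrow> y \<in> P \<Longrightarrow> rel (g x) (g y) = rel x y"
    unfolding rel_def P_def using wreath_rel[OF T0B] G_wreath by blast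
  have count: "lam * card \<Gamma> = r * card (B \<inter> \<Gamma>)"
    if GP: "\<Gamma> \<subseteq> P - {p}" and inv: "\<And>g x. g \<in> G \<Longrightarrow> g p = p \<Longrightarrow> x \<in> P \<Longrightarrow> (g x \<in> \<Gamma>) = (x \<in> \<Gamma>)" for \<Gamma>
  proof (rule count_lemma[OF finBs _ GP])
    show "finite \<Gamma>" using GP finP finite_subset by blast
    show "\<And>x. x \<in> P \<Longrightarrow> x \<noteq> p \<Longrightarrow> card {C\<in>Bs. p\<in>C \<and> x\<in>C} = lam"
      using lamd pP by blast
    show "card {C\<in>Bs. p\<in>C} = r" by (rule rdef)
    fix C assume "C \<in> Bs" "p \<in> C"
    then obtain g where g: "g \<in> G" "g p = p" "g ` B = C"
      using G_flag flag unfolding flag_transitive_def p_def by blast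
    have BP: "B \<subseteq> P" using Bk flag by auto
    have inj: "inj_on g P" using bij_in(1)[OF GB[OF g(1)]] .
    show "card (C \<inter> \<Gamma>) = card (B \<inter> \<Gamma>)"
      by (rule card_transfer[OF inj BP g(3)]) (rule inv[OF g(1,2)])
  qed
  define \<Gamma>1 where "\<Gamma>1 = {x \<in> P. x \<noteq> p \<and> rel x p}"
  define \<Gamma>2 where "\<Gamma>2 = {x \<in> P. \<not> rel x p}"
  have inv_common: "g x \<in> P \<and> (g x \<noteq> p) = (x \<noteq> p) \<and> rel (g x) p = rel x p"
    if "g \<in> G" "g p = p" "x \<in> P" for g x
  proof -
    have "inj_on g P" "g x \<in> P" using bij_in[OF GB[OF that(1)]] that(3) by auto
    moreover have "(g x = g p) = (x = p)" using inj_on_eq_iff[OF \<open>inj_on g P\<close> that(3) pP] .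
    then have "(g x \<noteq> p) = (x \<noteq> p)" using that(2) by simp
    moreover have "rel (g x) (g p) = rel x p" using grel[OF that(1,3) pP] .
    then have "rel (g x) p = rel x p" using that(2) by simp
    ultimately show ?thesis by blast
  qed
  have c1: "lam * card \<Gamma>1 = r * card (B \<inter> \<Gamma>1)"
  proof (rule count)
    show "\<Gamma>1 \<subseteq> P - {p}" unfolding \<Gamma>1_def by blast
    fix g x assume "g \<in> G" "g p = p" "x \<in> P"
    from inv_common[OF this] \<open>x \<in> P\<close> show "(g x \<in> \<Gamma>1) = (x \<in> \<Gamma>1)" unfolding \<Gamma>1_def by simp
  qed
  have c2: "lam * card \<Gamma>2 = r * card (B \<inter> \<Gamma>2)"
  proof (rule count)
    show "\<Gamma>2 \<subseteq> P - {p}" unfolding \<Gamma>2_def rel_def by blast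
    fix g x assume "g \<in> G" "g p = p" "x \<in> P"
    from inv_common[OF this] \<open>x \<in> P\<close> show "(g x \<in> \<Gamma>2) = (x \<in> \<Gamma>2)" unfolding \<Gamma>2_def by simp
  qed
  have cD1: "card (\<Delta> - {\<alpha>}) = \<omega> - 1" "card (\<Delta> - {\<beta>}) = \<omega> - 1"
    using aD finD card_Delta by (simp_all add: card_Diff_singleton)
  have G1eq: "\<Gamma>1 = ({\<alpha>} \<times> (\<Delta> - {\<beta>})) \<union> ((\<Delta> - {\<alpha>}) \<times> {\<beta>})"
    using aD unfolding \<Gamma>1_def P_def p_def rel_def by auto
  have cG1: "card \<Gamma>1 = 2 * (\<omega> - 1)"
  proof -
    have "card \<Gamma>1 = card ({\<alpha>} \<times> (\<Delta> - {\<beta>})) + card ((\<Delta> - {\<alpha>}) \<times> {\<beta>})"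
      unfolding G1eq by (rule card_Un_disjoint) (use finD in auto)
    also have "\<dots> = 2 * (\<omega> - 1)" using cD1 by (simp add: card_cartesian_product)
    finally show ?thesis .
  qed
  have G2eq: "\<Gamma>2 = (\<Delta> - {\<alpha>}) \<times> (\<Delta> - {\<beta>})"
    unfolding \<Gamma>2_def P_def p_def rel_def by auto
  have cG2: "card \<Gamma>2 = (\<omega> - 1) * (\<omega> - 1)"
    unfolding G2eq using cD1 by (simp add: card_cartesian_product)
  define c where "c = card {q \<in> B. fst q = \<alpha>}"
  define d where "d = card {q \<in> B. snd q = \<beta>}"
  have BP: "B \<subseteq> P" "card B = k" using Bk flag by auto
  have finB: "finite B" using BP finP finite_subset by blast
  have B1eq: "B \<inter> \<Gamma>1 = ({q \<in> B. fst q = \<alpha>} - {p}) \<union> ({q \<in> B. snd q = \<beta>} - {p})"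
    using BP unfolding \<Gamma>1_def rel_def p_def by auto
  have pin: "p \<in> {q \<in> B. fst q = \<alpha>}" "p \<in> {q \<in> B. snd q = \<beta>}" using flag p_def by auto
  have cB1: "card (B \<inter> \<Gamma>1) = (c - 1) + (d - 1)"
  proof -
    have "card (B \<inter> \<Gamma>1) = card ({q \<in> B. fst q = \<alpha>} - {p}) + card ({q \<in> B. snd q = \<beta>} - {p})"
      unfolding B1eq by (rule card_Un_disjoint) (use finB in \<open>auto simp: p_def\<close>)
    also have "\<dots> = (c - 1) + (d - 1)" unfolding c_def d_def
      using pin finB by (simp add: card_Diff_singleton)
    finally show ?thesis .
  qed
  have c1p: "c \<ge> 1" "d \<ge> 1" unfolding c_def d_def using finB pin
    by (auto intro!: Suc_leI card_gt_0_iff[THEN iffD2])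
  have kdec: "k = 1 + card (B \<inter> \<Gamma>1) + card (B \<inter> \<Gamma>2)"
  proof -
    have Bsplit: "B = insert p ((B \<inter> \<Gamma>1) \<union> (B \<inter> \<Gamma>2))"
      using BP flag unfolding \<Gamma>1_def \<Gamma>2_def p_def rel_def by auto
    have "card B = Suc (card ((B \<inter> \<Gamma>1) \<union> (B \<inter> \<Gamma>2)))"
      by (subst Bsplit, rule card_insert_disjoint) (use finB in \<open>auto simp: \<Gamma>1_def \<Gamma>2_def rel_def\<close>)
    also have "card ((B \<inter> \<Gamma>1) \<union> (B \<inter> \<Gamma>2)) = card (B \<inter> \<Gamma>1) + card (B \<inter> \<Gamma>2)"
      by (rule card_Un_disjoint) (use finB in \<open>auto simp: \<Gamma>1_def \<Gamma>2_def\<close>)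
    finally show ?thesis using BP by simp
  qed
  show ?thesis unfolding c_def[symmetric] d_def[symmetric]
  proof (rule arith_end[OF _ _ lambda_pos _ kdec cB1 c1p])
    show "lam * (2 * (\<omega> - 1)) = r * card (B \<inter> \<Gamma>1)" using c1 cG1 by simp
    show "lam * ((\<omega> - 1) * (\<omega> - 1)) = r * card (B \<inter> \<Gamma>2)" using c2 cG2 by simp
    show "2 \<le> \<omega>" using omega_ge by simp
  qed
qed

end
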